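(* Let $\alpha>0$, $n\ge1$ an integer, and $d\nu(r)=r^{n-1}e^{-1/r^{\alpha}}dr$ on $(0,\infty)$. There exist constants $c,c'>0$ and $0<v_0<1$ such that the function $$J(v)=\begin{cases}c\,v\big(\log\frac1v\big)^{1+\frac1\alpha}, & 0\le v\le v_0,\\ c'\,v^{\frac{n-1}{n}}, & v>v_0\end{cases}$$ (with $J(0)=0$) satisfies: (i) $J$ is a lower isoperimetric function for $\nu$; (ii) $J$ is concave, increasing and continuous on $(0,\infty)$.
   Context: For a Borel set $A\subset(0,\infty)$, $\nu^+(A)=\liminf_{r\to0^+}\frac{\nu(A^r)-\nu(A)}{r}$, where $A^r$ is the $r$-neighborhood of $A$. $J$ is a lower isoperimetric function for $\nu$ if $\nu^+(A)\ge J(\nu(A))$ for all Borel $A$. *)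

theory Defs
  imports "HOL-Analysis.Analysis"
begin

definition nu_meas :: "real \<Rightarrow> nat \<Rightarrow> real measure" where
  "nu_meas \<alpha> n = density lborel
     (\<lambda>r. if 0 < r then ennreal (r ^ (n - 1) * exp (- 1 / (r powr \<alpha>))) else 0)"

definition nbhd :: "real set \<Rightarrow> real \<Rightarrow> real set" where
  "nbhd A r = {x. \<exists>a\<in>A. dist x a < r}"

definition boundary_measure :: "real measure \<Rightarrow> real set \<Rightarrow> ereal" where
  "boundary_measure M A = Liminf (at_right 0)
     (\<lambda>r. (enn2ereal (emeasure M (nbhd A r)) - enn2ereal (emeasure M A)) / ereal r)"

definition lower_isoperimetric :: "real measure \<Rightarrow> (real \<Rightarrow> real) \<Rightarrow> bool" where
  "lower_isoperimetric M J \<longleftrightarrow>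
     (\<forall>A. A \<in> sets borel \<longrightarrow> A \<subseteq> {0<..} \<longrightarrow> emeasure M A < \<infinity> \<longrightarrow>
        boundary_measure M A \<ge> ereal (J (measure M A)))"

end

theory Submission
  imports Defs
begin


definition bet :: "real \<Rightarrow> real" where "bet a = 1 + 1/a"
definition L0 :: "real \<Rightarrow> nat \<Rightarrow> real" where "L0 a n = real n * bet a"
definition vz :: "real \<Rightarrow> nat \<Rightarrow> real" where "vz a n = exp (- L0 a n)"
definition gam :: "nat \<Rightarrow> real" where "gam n = real (n - 1) / real n"
definition kp :: "real \<Rightarrow> nat \<Rightarrow> real" where "kp a n = vz a n powr (1 / real n) * L0 a n powr bet a"
definition F1 :: "real \<Rightarrow> real \<Rightarrow> real" where "F1 a v = v * ln (1 / v) powr bet a"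
definition F1' :: "real \<Rightarrow> real \<Rightarrow> real" where
  "F1' a v = ln (1 / v) powr bet a - bet a * ln (1 / v) powr (bet a - 1)"
definition F2 :: "real \<Rightarrow> nat \<Rightarrow> real \<Rightarrow> real" where "F2 a n v = kp a n * v powr gam n"
definition F2' :: "real \<Rightarrow> nat \<Rightarrow> real \<Rightarrow> real" where "F2' a n v = kp a n * gam n * v powr (gam n - 1)"
definition J1 :: "real \<Rightarrow> nat \<Rightarrow> real \<Rightarrow> real" where
  "J1 a n v = (if v = 0 then 0 else if v \<le> vz a n then F1 a v else F2 a n v)"
definition J1' :: "real \<Rightarrow> nat \<Rightarrow> real \<Rightarrow> real" where
  "J1' a n v = (if v \<le> vz a n then F1' a v else F2' a n v)"

context fixes a :: real and n :: nat assumes a: "a > 0" and n: "n \<ge> 1"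
begin

lemma bet_gt1: "bet a > 1" using a by (simp add: bet_def)
lemma L0_ge: "L0 a n \<ge> bet a" using n bet_gt1 by (simp add: L0_def)
lemma L0_pos: "L0 a n > 0" using L0_ge bet_gt1 by linarith
lemma vz_pos: "vz a n > 0" by (simp add: vz_def)
lemma vz_lt1: "vz a n < 1" using L0_pos by (simp add: vz_def)
lemma ln_vz: "ln (1 / vz a n) = L0 a n" by (simp add: vz_def ln_div)
lemma gam_ge0: "gam n \<ge> 0" by (simp add: gam_def)
lemma gam_lt1: "gam n < 1" using n by (simp add: gam_def)
lemma gam_eq: "1 / real n + gam n = 1" using n by (simp add: gam_def field_simps of_nat_diff)
lemma kp_pos: "kp a n > 0" using vz_pos L0_pos by (simp add: kp_def)

lemma F1'_alt: "0 < v \<Longrightarrow> v < 1 \<Longrightarrow> F1' a v = ln (1/v) powr (bet a - 1) * (ln (1/v) - bet a)"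
proof -
  assume "0 < v" "v < 1"
  then have l: "ln (1/v) > 0" by (simp add: ln_div)
  then have "ln (1/v) powr bet a = ln (1/v) powr (bet a - 1) * ln (1/v)"
    by (simp add: powr_diff)
  then show ?thesis by (simp add: F1'_def algebra_simps)
qed

lemma F1_deriv: "0 < v \<Longrightarrow> v < 1 \<Longrightarrow> (F1 a has_real_derivative F1' a v) (at v)"
proof -
  assume v: "0 < v" "v < 1"
  then have l: "ln (1/v) > 0" by (simp add: ln_div)
  have e: "eventually (\<lambda>x. x \<in> {0<..<1}) (nhds v)" using v
    by (intro eventually_nhds_in_open) auto
  have "((\<lambda>x. x * (- ln x) powr bet a) has_real_derivative F1' a v) (at v)"
    using v l
    by (auto intro!: derivative_eq_intros simp: F1'_def ln_div field_simps powr_diff)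
  then show ?thesis
    by (rule has_field_derivative_transform_within_open[where S="{0<..<1}"]) (use v in \<open>auto simp: F1_def ln_div\<close>)
qed

lemma F2_deriv: "0 < v \<Longrightarrow> (F2 a n has_real_derivative F2' a n v) (at v)"
  unfolding F2_def F2'_def
  by (auto intro!: derivative_eq_intros)

lemma F1_vz: "F1 a (vz a n) = vz a n * L0 a n powr bet a"
  by (simp add: F1_def ln_vz)

lemma F2_vz: "F2 a n (vz a n) = vz a n * L0 a n powr bet a"
proof -
  have "vz a n powr (1 / real n) * vz a n powr gam n = vz a n"
    using gam_eq vz_pos by (simp add: powr_add[symmetric])
  then show ?thesis by (simp add: F2_def kp_def algebra_simps)
qed

lemma F1'_vz: "F1' a (vz a n) = L0 a n powr (bet a - 1) * (real n - 1) * bet a"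
proof -
  have "L0 a n - bet a = (real n - 1) * bet a" by (simp add: L0_def algebra_simps)
  then show ?thesis using F1'_alt[OF vz_pos vz_lt1] by (simp only: ln_vz mult.assoc)
qed

lemma F2'_vz: "F2' a n (vz a n) = L0 a n powr (bet a - 1) * (real n - 1) * bet a"
proof -
  have e0: "1 / real n + (gam n - 1) = 0" using gam_eq by simp
  have "vz a n powr (1 / real n) * vz a n powr (gam n - 1) = 1"
    using vz_pos by (simp add: powr_add[symmetric] e0)
  moreover have "L0 a n powr bet a = L0 a n powr (bet a - 1) * L0 a n"
    using L0_pos by (simp add: powr_diff)
  moreover have "gam n * L0 a n = (real n - 1) * bet a"
    using n by (simp add: gam_def L0_def of_nat_diff)
  ultimately have "F2' a n (vz a n) = L0 a n powr (bet a - 1) * (gam n * L0 a n)"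
  proof -
    assume h1: "vz a n powr (1 / real n) * vz a n powr (gam n - 1) = 1"
      and h2: "L0 a n powr bet a = L0 a n powr (bet a - 1) * L0 a n"
    have "F2' a n (vz a n) = (vz a n powr (1 / real n) * vz a n powr (gam n - 1)) * L0 a n powr bet a * gam n"
      by (simp add: F2'_def kp_def)
    also have "\<dots> = L0 a n powr (bet a - 1) * (gam n * L0 a n)" by (simp add: h1 h2)
    finally show ?thesis .
  qed
  then show ?thesis using \<open>gam n * L0 a n = (real n - 1) * bet a\<close> by simp
qed

lemma J1_deriv: "0 < v \<Longrightarrow> (J1 a n has_real_derivative J1' a n v) (at v)"
proof -
  assume v: "0 < v"
  consider "v < vz a n" | "v = vz a n" | "v > vz a n" by linarith
  then show ?thesis
  proof cases
    case 1
    have "(F1 a has_real_derivative J1' a n v) (at v)" using F1_deriv v 1 vz_lt1 by (simp add: J1'_def)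
    then show ?thesis
      by (rule has_field_derivative_transform_within_open[where S="{0<..<vz a n}"])
         (use v 1 in \<open>auto simp: J1_def J1'_def\<close>)
  next
    case 3
    have "(F2 a n has_real_derivative J1' a n v) (at v)" using F2_deriv v 3 by (simp add: J1'_def)
    then show ?thesis
      by (rule has_field_derivative_transform_within_open[where S="{vz a n<..}"])
         (use v 3 vz_pos in \<open>auto simp: J1_def J1'_def\<close>)
  next
    case 2
    have d1: "((\<lambda>y. (F1 a y - F1 a v) / (y - v)) \<longlongrightarrow> F1' a v) (at v)"
      using F1_deriv[of v] v 2 vz_lt1 by (simp add: has_field_derivative_iff)
    have d2: "((\<lambda>y. (F2 a n y - F2 a n v) / (y - v)) \<longlongrightarrow> F2' a n v) (at v)"
      using F2_deriv[of v] v by (simp add: has_field_derivative_iff)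
    have Jv: "J1 a n v = F1 a v" "J1 a n v = F2 a n v" "J1' a n v = F1' a v" "J1' a n v = F2' a n v"
      using 2 v F1_vz F2_vz F1'_vz F2'_vz by (auto simp: J1_def J1'_def)
    have l: "((\<lambda>y. (J1 a n y - J1 a n v) / (y - v)) \<longlongrightarrow> J1' a n v) (at_left v)"
    proof -
      have "eventually (\<lambda>y. (F1 a y - F1 a v) / (y - v) = (J1 a n y - J1 a n v) / (y - v)) (at_left v)"
        using eventually_at_left_real[OF v]
        by eventually_elim (use 2 Jv in \<open>auto simp: J1_def\<close>)
      note E = this
      have "((\<lambda>y. (F1 a y - F1 a v) / (y - v)) \<longlongrightarrow> J1' a n v) (at v)"
        using d1 Jv(3) by simp
      then have T: "((\<lambda>y. (F1 a y - F1 a v) / (y - v)) \<longlongrightarrow> J1' a n v) (at_left v)"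
        by (simp add: filterlim_at_split)
      show ?thesis by (rule Lim_transform_eventually[OF T E])
    qed
    have r: "((\<lambda>y. (J1 a n y - J1 a n v) / (y - v)) \<longlongrightarrow> J1' a n v) (at_right v)"
    proof -
      have "eventually (\<lambda>y. (F2 a n y - F2 a n v) / (y - v) = (J1 a n y - J1 a n v) / (y - v)) (at_right v)"
        using eventually_at_right_less[of v]
        by eventually_elim (use 2 Jv v in \<open>auto simp: J1_def\<close>)
      note E = this
      have "((\<lambda>y. (F2 a n y - F2 a n v) / (y - v)) \<longlongrightarrow> J1' a n v) (at v)"
        using d2 Jv(4) by simp
      then have T: "((\<lambda>y. (F2 a n y - F2 a n v) / (y - v)) \<longlongrightarrow> J1' a n v) (at_right v)"
        by (simp add: filterlim_at_split)
      show ?thesis by (rule Lim_transform_eventually[OF T E])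
    qed
    show ?thesis unfolding has_field_derivative_iff
      using filterlim_split_at[OF l r] by simp
  qed
qed

lemma J1'_nonneg: "0 < v \<Longrightarrow> J1' a n v \<ge> 0"
proof -
  assume v: "0 < v"
  show ?thesis
  proof (cases "v \<le> vz a n")
    case True
    have "ln v \<le> ln (vz a n)" using v True vz_pos by simp
    then have "ln (1/v) \<ge> L0 a n" using v by (simp add: ln_div vz_def)
    then have "ln (1/v) \<ge> bet a" using L0_ge by linarith
    then show ?thesis using True F1'_alt[of v] v vz_lt1 by (simp add: J1'_def)
  next
    case False
    then show ?thesis using kp_pos gam_ge0 by (simp add: J1'_def F2'_def)
  qed
qed

lemma F1'_anti: "0 < x \<Longrightarrow> x \<le> y \<Longrightarrow> y \<le> vz a n \<Longrightarrow> F1' a y \<le> F1' a x"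
proof -
  assume xy: "0 < x" "x \<le> y" "y \<le> vz a n"
  have "ln y \<le> ln (vz a n)" using xy vz_pos by simp
  then have ly: "ln (1/y) \<ge> L0 a n" using xy by (simp add: ln_div vz_def)
  have lxy: "ln (1/x) \<ge> ln (1/y)" using xy by (simp add: ln_div)
  have b: "ln (1/y) \<ge> bet a" using ly L0_ge by linarith
  have "ln (1/y) powr (bet a - 1) \<le> ln (1/x) powr (bet a - 1)"
    using lxy b bet_gt1 by (intro powr_mono2) auto
  moreover have "ln (1/y) - bet a \<le> ln (1/x) - bet a" using lxy by simp
  ultimately have "ln (1/y) powr (bet a - 1) * (ln (1/y) - bet a) \<le> ln (1/x) powr (bet a - 1) * (ln (1/x) - bet a)"
    using b by (intro mult_mono) auto
  then show ?thesis using F1'_alt[of x] F1'_alt[of y] xy vz_lt1 by simp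
qed

lemma F2'_anti: "0 < x \<Longrightarrow> x \<le> y \<Longrightarrow> F2' a n y \<le> F2' a n x"
proof -
  assume xy: "0 < x" "x \<le> y"
  have "y powr (gam n - 1) \<le> x powr (gam n - 1)"
    by (rule powr_mono2') (use gam_lt1 xy in auto)
  moreover have "0 \<le> kp a n * gam n" using kp_pos gam_ge0 by simp
  ultimately show ?thesis unfolding F2'_def by (rule mult_left_mono)
qed

lemma J1'_anti: "0 < x \<Longrightarrow> x \<le> y \<Longrightarrow> J1' a n y \<le> J1' a n x"
proof -
  assume xy: "0 < x" "x \<le> y"
  consider "y \<le> vz a n" | "x > vz a n" | "x \<le> vz a n" "vz a n < y" by linarith
  then show ?thesis
  proof cases
    case 1 then show ?thesis using F1'_anti xy by (simp add: J1'_def)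
  next
    case 2 then show ?thesis using F2'_anti xy by (simp add: J1'_def)
  next
    case 3
    have "F2' a n y \<le> F2' a n (vz a n)" using F2'_anti vz_pos 3 by simp
    also have "\<dots> = F1' a (vz a n)" using F1'_vz F2'_vz by simp
    also have "\<dots> \<le> F1' a x" using F1'_anti xy 3 by simp
    finally show ?thesis using 3 by (simp add: J1'_def)
  qed
qed

lemma J1_concave: "concave_on {0<..} (J1 a n)"
proof -
  have "convex_on {0<..} (\<lambda>x. - J1 a n x)"
    by (rule convex_on_realI[where f'="\<lambda>x. - J1' a n x"])
       (auto intro!: derivative_eq_intros J1_deriv J1'_anti)
  then show ?thesis by (simp add: concave_on_def)
qed

lemma J1_cont: "continuous_on {0<..} (J1 a n)"
  by (rule DERIV_continuous_on, rule has_field_derivative_at_within, rule J1_deriv) auto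

lemma J1_mono: "0 < x \<Longrightarrow> x \<le> y \<Longrightarrow> J1 a n x \<le> J1 a n y"
  apply (rule DERIV_nonneg_imp_increasing_open[where f="J1 a n"])
    apply simp
   apply (metis J1_deriv J1'_nonneg order.strict_trans)
  apply (rule continuous_on_subset[OF J1_cont]) by auto

lemma J1_mono_on: "mono_on {0<..} (J1 a n)"
  by (auto intro!: mono_onI J1_mono)

lemma J1_nonneg: "0 \<le> v \<Longrightarrow> J1 a n v \<ge> 0"
proof -
  assume "0 \<le> v"
  show ?thesis
  proof (cases "v = 0")
    case False
    then show ?thesis using \<open>0 \<le> v\<close> kp_pos by (auto simp: J1_def F1_def F2_def)
  qed (simp add: J1_def)
qed

lemma J1_mono0: "0 \<le> x \<Longrightarrow> x \<le> y \<Longrightarrow> J1 a n x \<le> J1 a n y"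
proof -
  assume xy: "0 \<le> x" "x \<le> y"
  show ?thesis
  proof (cases "x = 0")
    case True
    then have "J1 a n x = 0" by (simp add: J1_def)
    then show ?thesis using J1_nonneg[of y] xy by linarith
  next
    case False
    then show ?thesis using J1_mono[of x y] xy by linarith
  qed
qed

end


definition pp :: "real \<Rightarrow> nat \<Rightarrow> real \<Rightarrow> real" where
  "pp a n s = s ^ (n - 1) * exp (- 1 / (s powr a))"

definition GG :: "real \<Rightarrow> real \<Rightarrow> real" where
  "GG a t = (if 0 < t then exp (- (t powr (- a))) else 0)"
definition gg :: "real \<Rightarrow> real \<Rightarrow> real" where
  "gg a t = (if 0 < t then a * t powr (- a - 1) * exp (- (t powr (- a))) else 0)"

context fixes a :: real and n :: nat assumes a: "a > 0" and n: "n \<ge> 1"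
begin

lemma dens_meas: "(\<lambda>r. if 0 < r then ennreal (r ^ (n - 1) * exp (- 1 / (r powr a))) else 0) \<in> borel_measurable lborel"
  by (rule measurable_If) auto

lemma sets_nu [simp]: "sets (nu_meas a n) = sets borel"
  by (simp add: nu_meas_def)

lemma emeasure_nu: "S \<in> sets borel \<Longrightarrow> emeasure (nu_meas a n) S =
   (\<integral>\<^sup>+ x. (if 0 < x then ennreal (x ^ (n - 1) * exp (- 1 / (x powr a))) else 0) * indicator S x \<partial>lborel)"
  unfolding nu_meas_def by (rule emeasure_density[OF dens_meas]) simp

lemma pp_pos: "0 < s \<Longrightarrow> pp a n s > 0" by (simp add: pp_def)

lemma pp_mono: "0 < s \<Longrightarrow> s \<le> t \<Longrightarrow> pp a n s \<le> pp a n t"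
proof -
  assume st: "0 < s" "s \<le> t"
  have "s powr a \<le> t powr a" using st a by (intro powr_mono2) auto
  then have "1 / t powr a \<le> 1 / s powr a" using st by (intro divide_left_mono) auto
  then have "exp (- 1 / s powr a) \<le> exp (- 1 / t powr a)" by simp
  moreover have "s ^ (n - 1) \<le> t ^ (n - 1)" using st by (intro power_mono) auto
  ultimately show ?thesis unfolding pp_def using st by (intro mult_mono) auto
qed

lemma M1: "0 < s \<Longrightarrow> emeasure (nu_meas a n) {0<..s} \<le> ennreal (s ^ n)"
proof -
  assume s: "0 < s"
  have "emeasure (nu_meas a n) {0<..s} \<le> (\<integral>\<^sup>+ x. ennreal (s ^ (n - 1)) * indicator {0<..s} x \<partial>lborel)"
    unfolding emeasure_nu[of "{0<..s}", simplified]
  proof (rule nn_integral_mono)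
    fix x :: real
    show "(if 0 < x then ennreal (x ^ (n - 1) * exp (- 1 / (x powr a))) else 0) * indicator {0<..s} x
          \<le> ennreal (s ^ (n - 1)) * indicator {0<..s} x"
    proof (cases "0 < x \<and> x \<le> s")
      case True
      have "x ^ (n - 1) * exp (- 1 / (x powr a)) \<le> s ^ (n - 1) * 1"
        using True by (intro mult_mono power_mono) auto
      then show ?thesis using True by (simp add: indicator_def)
    qed (auto simp: indicator_def)
  qed
  also have "\<dots> = ennreal (s ^ (n - 1)) * ennreal s"
    using s by (subst nn_integral_cmult_indicator) auto
  also have "\<dots> = ennreal (s ^ n)"
  proof -
    have "s ^ (n - 1) * s = s ^ n" using n by (cases n) auto
    then show ?thesis using s by (simp add: ennreal_mult[symmetric])
  qed
  finally show ?thesis .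
qed

lemma M3: "0 < s \<Longrightarrow> 0 < r \<Longrightarrow> emeasure (nu_meas a n) {s<..<s+r} \<ge> ennreal (r * pp a n s)"
proof -
  assume s: "0 < s" and r: "0 < r"
  have "ennreal (r * pp a n s) = ennreal (pp a n s) * ennreal r"
    using r pp_pos[OF s] by (simp add: ennreal_mult[symmetric] mult.commute)
  also have "\<dots> = (\<integral>\<^sup>+ x. ennreal (pp a n s) * indicator {s<..<s+r} x \<partial>lborel)"
    using r by (subst nn_integral_cmult_indicator) auto
  also have "\<dots> \<le> emeasure (nu_meas a n) {s<..<s+r}"
    unfolding emeasure_nu[of "{s<..<s+r}", simplified]
  proof (rule nn_integral_mono)
    fix x :: real
    show "ennreal (pp a n s) * indicator {s<..<s+r} x \<le>
      (if 0 < x then ennreal (x ^ (n - 1) * exp (- 1 / (x powr a))) else 0) * indicator {s<..<s+r} x"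
    proof (cases "s < x \<and> x < s + r")
      case True
      then have "pp a n s \<le> pp a n x" using s by (intro pp_mono) auto
      then show ?thesis using True s by (simp add: indicator_def pp_def)
    qed (auto simp: indicator_def)
  qed
  finally show ?thesis .
qed

lemma GG_deriv: "0 < t \<Longrightarrow> (GG a has_real_derivative gg a t) (at t)"
proof -
  assume t: "0 < t"
  have "((\<lambda>t. exp (- (t powr (- a)))) has_real_derivative gg a t) (at t)"
    using t by (auto intro!: derivative_eq_intros simp: gg_def algebra_simps)
  then show ?thesis
    by (rule has_field_derivative_transform_within_open[where S="{0<..}"]) (use t in \<open>auto simp: GG_def\<close>)
qed

lemma GG_cont: "continuous_on {0..s} (GG a)"
  unfolding continuous_on_eq_continuous_within
proof
  fix x assume x: "x \<in> {0..s}"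
  show "continuous (at x within {0..s}) (GG a)"
  proof (cases "x = 0")
    case False
    then have x0: "0 < x" using x by simp
    have "isCont (GG a) x" using DERIV_isCont[OF GG_deriv[OF x0]] .
    then show ?thesis by (rule continuous_at_imp_continuous_within)
  next
    case True
    have ev: "eventually (\<lambda>t. 0 \<le> t) (at 0 within {0..s})"
      by (auto simp: eventually_at_filter)
    have pw: "((\<lambda>t. t powr a) \<longlongrightarrow> 0) (at 0 within {0..s})"
      by (rule tendsto_zero_powrI[OF tendsto_ident_at tendsto_const ev a])
    have b: "eventually (\<lambda>t. 0 \<le> GG a t \<and> GG a t \<le> t powr a) (at 0 within {0..s})"
      using ev
    proof eventually_elim
      fix t :: real assume t: "0 \<le> t"
      show "0 \<le> GG a t \<and> GG a t \<le> t powr a"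
      proof (cases "t = 0")
        case False
        then have tp: "0 < t" using t by simp
        have y: "t powr (- a) > 0" using tp by simp
        have "exp (t powr (- a)) \<ge> t powr (- a)" using exp_ge_add_one_self[of "t powr (-a)"] by linarith
        then have "exp (- (t powr (- a))) \<le> 1 / t powr (- a)"
          using y by (simp add: exp_minus field_simps)
        also have "\<dots> = t powr a" using tp by (simp add: powr_minus_divide)
        finally show ?thesis using tp by (simp add: GG_def)
      qed (simp add: GG_def)
    qed
    have "(GG a \<longlongrightarrow> 0) (at 0 within {0..s})"
      by (rule tendsto_sandwich[OF _ _ tendsto_const pw]) (use b in \<open>auto elim: eventually_mono\<close>)
    then show ?thesis using True by (simp add: continuous_within GG_def)
  qed
qed

lemma gg_integral: "0 < s \<Longrightarrow> (\<integral>\<^sup>+ x. ennreal (gg a x * indicator {0..s} x) \<partial>lborel) = ennreal (GG a s)"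
proof -
  assume s: "0 < s"
  have "(gg a has_integral (GG a s - GG a 0)) {0..s}"
    using s GG_cont
    by (intro fundamental_theorem_of_calculus_interior)
       (auto simp: has_real_derivative_iff_has_vector_derivative[symmetric] intro!: GG_deriv)
  moreover have "GG a 0 = 0" by (simp add: GG_def)
  ultimately have "(gg a has_integral GG a s) {0..s}" by simp
  then have "((\<lambda>x. if x \<in> {0..s} then gg a x else 0) has_integral GG a s) UNIV"
    by (simp only: has_integral_restrict_UNIV)
  moreover have "(\<lambda>x. gg a x * indicator {0..s} x) = (\<lambda>x. if x \<in> {0..s} then gg a x else 0)"
    by (auto simp: indicator_def)
  ultimately have I: "((\<lambda>x. gg a x * indicator {0..s} x) has_integral GG a s) UNIV" by simp
  have "(\<lambda>x. gg a x * indicator {0..s} x) \<in> borel_measurable borel"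
    unfolding gg_def by measurable
  moreover have "\<And>x. 0 \<le> gg a x * indicator {0..s} x" using a by (simp add: gg_def indicator_def)
  ultimately show ?thesis using nn_integral_has_integral_lborel[OF _ _ I] by blast
qed

lemma M2: "0 < s \<Longrightarrow> emeasure (nu_meas a n) {0<..s} \<le> ennreal (s powr (a + 1) * pp a n s / a)"
proof -
  assume s: "0 < s"
  define C where "C = s powr (real n + a) / a"
  have C: "C > 0" using s a by (simp add: C_def)
  have "emeasure (nu_meas a n) {0<..s} \<le> (\<integral>\<^sup>+ x. ennreal C * ennreal (gg a x * indicator {0..s} x) \<partial>lborel)"
    unfolding emeasure_nu[of "{0<..s}", simplified]
  proof (rule nn_integral_mono)
    fix x :: real
    show "(if 0 < x then ennreal (x ^ (n - 1) * exp (- 1 / (x powr a))) else 0) * indicator {0<..s} x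
          \<le> ennreal C * ennreal (gg a x * indicator {0..s} x)"
    proof (cases "0 < x \<and> x \<le> s")
      case True
      then have x: "0 < x" "x \<le> s" by auto
      have e: "exp (- 1 / (x powr a)) = exp (- (x powr (- a)))" using x by (simp add: powr_minus_divide)
      have "x powr (real n + a) \<le> s powr (real n + a)" using x a by (intro powr_mono2) auto
      then have "x powr (real n + a) * x powr (- a - 1) \<le> s powr (real n + a) * x powr (- a - 1)"
        by (intro mult_right_mono) auto
      moreover have "x powr (real n + a) * x powr (- a - 1) = x ^ (n - 1)"
        using x n by (simp add: powr_add[symmetric] powr_realpow[symmetric] of_nat_diff)
      ultimately have "x ^ (n - 1) \<le> C * (a * x powr (- a - 1))" using a by (simp add: C_def)
      then have "x ^ (n - 1) * exp (- 1 / (x powr a)) \<le> C * (a * x powr (- a - 1) * exp (- (x powr (- a))))"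
        unfolding e by (simp add: mult_right_mono mult.assoc)
      then show ?thesis using x C a by (simp add: indicator_def gg_def ennreal_mult[symmetric])
    qed (use C in \<open>auto simp: indicator_def\<close>)
  qed
  also have "\<dots> = ennreal C * ennreal (GG a s)"
  proof -
    have meas: "(\<lambda>x. ennreal (gg a x * indicator {0..s} x)) \<in> borel_measurable lborel"
      unfolding gg_def by measurable
    show ?thesis by (simp only: nn_integral_cmult[OF meas] gg_integral[OF s])
  qed
  also have "\<dots> = ennreal (s powr (a + 1) * pp a n s / a)"
  proof -
    have "C * GG a s = s powr (a + 1) * pp a n s / a"
    proof -
      have e1: "s ^ (n - 1) = s powr (real n - 1)" using s n by (simp add: powr_realpow[symmetric] of_nat_diff)
      have e2: "s powr (a + 1) * s powr (real n - 1) = s powr (real n + a)"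
        using s by (simp add: powr_add[symmetric] add.commute)
      have e3: "exp (- 1 / (s powr a)) = exp (- (s powr (- a)))" using s by (simp add: powr_minus_divide)
      have "s powr (a + 1) * pp a n s / a = (s powr (a + 1) * s powr (real n - 1)) * exp (- (s powr (- a))) / a"
        unfolding pp_def e1 e3 by (simp add: mult.assoc)
      also have "\<dots> = C * GG a s" unfolding e2 C_def GG_def using s by simp
      finally show ?thesis by simp
    qed
    then show ?thesis using C s by (simp add: ennreal_mult[symmetric] GG_def)
  qed
  finally show ?thesis .
qed

end


definition Kc :: "real \<Rightarrow> nat \<Rightarrow> real" where
  "Kc a n = kp a n * exp 1 + kp a n / (a * vz a n) + (1 + (a + real n) / a + \<bar>ln a\<bar>) powr bet a / a
     + exp 1 * (1 + \<bar>ln a\<bar>) powr bet a + L0 a n powr bet a / a + exp 1 * vz a n * L0 a n powr bet a"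

context fixes a :: real and n :: nat assumes a: "a > 0" and n: "n \<ge> 1"
begin

lemma Bnd:
  fixes s x :: real
  assumes s: "0 < s" and x0: "0 \<le> x" and xsn: "x \<le> s ^ n" and xw: "x \<le> s powr (a + 1) * pp a n s / a"
  shows "J1 a n x \<le> Kc a n * pp a n s"
proof -
  note ab = a n
  define p where "p = pp a n s"
  define u where "u = 1 / (s powr a)"
  define w where "w = s powr (a + 1) * p / a"
  define K1 where "K1 = kp a n * exp 1"
  define K2 where "K2 = kp a n / (a * vz a n)"
  define C1 where "C1 = 1 + (a + real n) / a + \<bar>ln a\<bar>"
  define K3 where "K3 = C1 powr bet a / a"
  define D where "D = 1 + \<bar>ln a\<bar>"
  define K4 where "K4 = exp 1 * D powr bet a"
  define K5 where "K5 = L0 a n powr bet a / a"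
  define K6 where "K6 = exp 1 * vz a n * L0 a n powr bet a"
  have Kc: "Kc a n = K1 + K2 + K3 + K4 + K5 + K6"
    by (simp add: Kc_def K1_def K2_def K3_def K4_def K5_def K6_def C1_def D_def)
  have v0: "0 < vz a n" "vz a n < 1" using vz_pos[OF ab] vz_lt1[OF ab] by auto
  have kp: "kp a n > 0" using kp_pos[OF ab] .
  have L0p: "L0 a n > 0" using L0_pos[OF ab] .
  have bg: "bet a > 1" using bet_gt1[OF a n] .
  have Kn: "K1 \<ge> 0" "K2 \<ge> 0" "K3 \<ge> 0" "K4 \<ge> 0" "K5 \<ge> 0" "K6 \<ge> 0"
    unfolding K1_def K2_def K3_def K4_def K5_def K6_def using kp v0 a by auto
  have pp: "p > 0" unfolding p_def using pp_pos[OF ab s] .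
  have pe: "p = s ^ (n - 1) * exp (- u)" unfolding p_def pp_def u_def by simp
  have up: "u > 0" using s by (simp add: u_def)
  have wp: "w > 0" using s pp a by (simp add: w_def)
  have xw': "x \<le> w" using xw by (simp add: w_def p_def)
  have KcI: "J1 a n x \<le> Kc a n * p" if "J1 a n x \<le> K * p" "K \<le> Kc a n" for K
    using that pp by (meson mult_right_mono order.trans less_imp_le)
  have f1: "exp (-1) * s ^ (n - 1) \<le> p" if "1 \<le> s"
  proof -
    have "1 powr a \<le> s powr a" using that a by (intro powr_mono2) auto
    then have "u \<le> 1" using s by (simp add: u_def)
    then have "exp (-1) \<le> exp (- u)" by simp
    then show ?thesis unfolding pe using s by (simp add: mult.commute mult_left_mono)
  qed
  have f1': "exp (-1) \<le> p" if "1 \<le> s"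
  proof -
    have "1 \<le> s ^ (n - 1)" using that by (simp add: one_le_power)
    then have "exp (-1) * 1 \<le> exp (-1) * s ^ (n - 1)" by (rule mult_left_mono) simp
    then show ?thesis using f1[OF that] by linarith
  qed
  have sle1: "s powr (a + 1) \<le> 1" if "s \<le> 1"
  proof -
    have "s powr (a + 1) \<le> 1 powr (a + 1)" using that s a by (intro powr_mono2) auto
    then show ?thesis by simp
  qed
  have f2: "a * vz a n < p" if "vz a n < w" "s \<le> 1"
  proof -
    have "w \<le> p / a" unfolding w_def using sle1[OF that(2)] pp a
      by (simp add: divide_right_mono mult_left_le_one_le mult.commute)
    then have "a * w \<le> p" using a by (simp add: field_simps)
    moreover have "a * vz a n < a * w" using that(1) a by simp
    ultimately show ?thesis by linarith
  qed
  show ?thesis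
  proof (cases "x = 0")
    case True
    then have "J1 a n x = 0" by (simp add: J1_def)
    moreover have "Kc a n \<ge> 0" using Kc Kn by simp
    ultimately show ?thesis using pp p_def by simp
  next
    case xn0: False
    then have xp: "0 < x" using x0 by simp
    show ?thesis
    proof (cases "x \<le> vz a n")
      case False
      then have J: "J1 a n x = kp a n * x powr gam n" using xn0 by (simp add: J1_def F2_def)
      have "x powr gam n \<le> (s ^ n) powr gam n" using xsn xp gam_ge0[OF a n] by (intro powr_mono2) auto
      also have "(s ^ n) powr gam n = s ^ (n - 1)"
      proof -
        have "(s ^ n) powr gam n = s powr (real n * gam n)"
          using s by (simp add: powr_realpow[symmetric] powr_powr)
        also have "real n * gam n = real (n - 1)" using n by (simp add: gam_def)
        finally show ?thesis using s by (simp add: powr_realpow)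
      qed
      finally have J2: "J1 a n x \<le> kp a n * s ^ (n - 1)" unfolding J using kp by simp
      show ?thesis
      proof (cases "1 \<le> s")
        case True
        have "s ^ (n - 1) \<le> exp 1 * p" using f1[OF True] by (simp add: exp_minus field_simps)
        then have "J1 a n x \<le> K1 * p" using J2 kp unfolding K1_def
          by (metis (no_types, opaque_lifting) mult.assoc mult_left_mono order.trans less_imp_le)
        then show ?thesis unfolding p_def[symmetric] by (rule KcI) (use Kc Kn in simp)
      next
        case False
        have "s ^ (n - 1) \<le> 1" using False s by (intro power_le_one) auto
        then have "J1 a n x \<le> kp a n" using J2 kp by (smt (verit) mult_left_le)
        moreover have "a * vz a n < p" using f2 False False xw' \<open>\<not> x \<le> vz a n\<close> by simp
        then have "kp a n \<le> K2 * p" unfolding K2_def using kp a v0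
          by (simp add: field_simps)
        ultimately have "J1 a n x \<le> K2 * p" by simp
        then show ?thesis unfolding p_def[symmetric] by (rule KcI) (use Kc Kn in simp)
      qed
    next
      case True
      note xv = True
      show ?thesis
      proof (cases "w \<le> vz a n")
        case True
        have "J1 a n x \<le> J1 a n w" using J1_mono[OF ab xp xw'] .
        also have "\<dots> = w * ln (1 / w) powr bet a" using wp True by (simp add: J1_def F1_def)
        finally have J: "J1 a n x \<le> w * ln (1 / w) powr bet a" .
        have Lw: "ln (1 / w) = u - (a + real n) * ln s + ln a"
        proof -
          have "ln w = (a + 1) * ln s + real (n - 1) * ln s - u - ln a"
            unfolding w_def pe using s a up
            by (simp add: ln_mult ln_div ln_realpow)
          then show ?thesis using wp n by (simp add: ln_div of_nat_diff algebra_simps)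
        qed
        have Lpos: "ln (1 / w) \<ge> L0 a n"
        proof -
          have "ln w \<le> ln (vz a n)" using wp True by simp
          then show ?thesis using wp by (simp add: ln_div vz_def)
        qed
        show ?thesis
        proof (cases "s \<le> 1")
          case True
          have u1: "u \<ge> 1"
          proof -
            have "s powr a \<le> 1 powr a" using True s a by (intro powr_mono2) auto
            then show ?thesis using s by (simp add: u_def)
          qed
          have ue: "u = s powr (- a)" using s by (simp add: u_def powr_minus_divide)
          have lns: "- ln s \<le> u / a"
          proof -
            have "ln u = - a * ln s" using s by (simp add: ue ln_powr)
            moreover have "ln u \<le> u - 1" using up by (rule ln_le_minus_one)
            ultimately have "a * (- ln s) \<le> u" by simp
            then show ?thesis using a by (simp add: field_simps)
          qed
          have "(a + real n) * (- ln s) \<le> (a + real n) * (u / a)"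
            using lns a by (intro mult_left_mono) auto
          then have h1: "- ((a + real n) * ln s) \<le> (a + real n) * (u / a)" by simp
          have h2: "ln a \<le> \<bar>ln a\<bar> * u" using u1
            by (smt (verit) abs_ge_zero mult_le_cancel_left1)
          have eq: "C1 * u = u + (a + real n) * (u / a) + \<bar>ln a\<bar> * u"
            using a by (simp add: C1_def field_simps)
          have "ln (1 / w) \<le> C1 * u" unfolding Lw eq using h1 h2 by linarith
          then have "ln (1 / w) powr bet a \<le> (C1 * u) powr bet a"
            using Lpos L0p bg by (intro powr_mono2) auto
          also have "\<dots> = C1 powr bet a * u powr bet a"
            using up u1 by (simp add: powr_mult C1_def)
          finally have W1: "w * ln (1 / w) powr bet a \<le> w * (C1 powr bet a * u powr bet a)"
            using wp by (intro mult_left_mono) auto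
          have W2: "w * u powr bet a = p / a"
          proof -
            have "u powr bet a = s powr (- (a + 1))"
              unfolding ue using s a by (simp add: powr_powr bet_def algebra_simps)
            then have "w * u powr bet a = (s powr (a + 1) * s powr (- (a + 1))) * (p / a)"
              unfolding w_def by (simp add: mult_ac)
            moreover have "s powr (a + 1) * s powr (- (a + 1)) = 1"
              using s by (simp add: powr_add[symmetric])
            ultimately show ?thesis by simp
          qed
          have "w * (C1 powr bet a * u powr bet a) = C1 powr bet a * (w * u powr bet a)"
            by (simp add: mult_ac)
          also have "\<dots> = K3 * p" unfolding W2 K3_def using a by (simp add: field_simps)
          finally have W3: "w * (C1 powr bet a * u powr bet a) = K3 * p" .
          have "J1 a n x \<le> K3 * p" using J W1 W3 by linarith
          then show ?thesis unfolding p_def[symmetric] by (rule KcI) (use Kc Kn in simp)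
        next
          case False
          have "1 powr a \<le> s powr a" using False a by (intro powr_mono2) auto
          then have "u \<le> 1" using s by (simp add: u_def)
          moreover have "ln s \<ge> 0" using False by simp
          ultimately have "ln (1 / w) \<le> D" unfolding Lw D_def using a
            by (smt (verit) mult_nonneg_nonneg of_nat_0_le_iff)
          then have "ln (1 / w) powr bet a \<le> D powr bet a"
            using Lpos L0p bg by (intro powr_mono2) auto
          then have J': "J1 a n x \<le> w * D powr bet a" using J wp
            by (smt (verit) mult_left_mono)
          have "w \<le> 1" using True v0 by simp
          have "exp (-1) \<le> p" using f1' False by simp
          have "w \<le> exp 1 * p"
          proof -
            have "s powr (a + 1) * p \<le> a" using \<open>w \<le> 1\<close> a by (simp add: w_def field_simps)
            also have "a \<le> a * (exp 1 * p)"
            proof -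
              have "1 \<le> exp 1 * p" using \<open>exp (-1) \<le> p\<close> by (simp add: exp_minus field_simps)
              then show ?thesis using a by simp
            qed
            finally have "s powr (a + 1) * p \<le> a * (exp 1 * p)" .
            then have "s powr (a + 1) \<le> a * exp 1" using pp by (simp add: field_simps)
            then have "s powr (a + 1) * p \<le> a * exp 1 * p" using pp by (intro mult_right_mono) auto
            then show ?thesis using a by (simp add: w_def field_simps)
          qed
          then have "w * D powr bet a \<le> exp 1 * p * D powr bet a" by (intro mult_right_mono) auto
          then have "J1 a n x \<le> K4 * p" using J' unfolding K4_def by (simp add: algebra_simps)
          then show ?thesis unfolding p_def[symmetric] by (rule KcI) (use Kc Kn in simp)
        qed
      next
        case False
        have "J1 a n x \<le> J1 a n (vz a n)" using J1_mono[OF ab xp xv] .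
        also have "\<dots> = vz a n * L0 a n powr bet a" using v0 F1_vz[OF ab] by (simp add: J1_def)
        finally have J: "J1 a n x \<le> vz a n * L0 a n powr bet a" .
        show ?thesis
        proof (cases "s \<le> 1")
          case True
          have "a * vz a n < p" using f2 False True by simp
          then have "(a * vz a n) * L0 a n powr bet a \<le> p * L0 a n powr bet a"
            by (intro mult_right_mono) auto
          then have "vz a n * L0 a n powr bet a \<le> K5 * p" unfolding K5_def using a
            by (simp add: field_simps)
          then have "J1 a n x \<le> K5 * p" using J by simp
          then show ?thesis unfolding p_def[symmetric] by (rule KcI) (use Kc Kn in simp)
        next
          case False
          have "exp (-1) \<le> p" using f1' False by simp
          then have "1 \<le> exp 1 * p" by (simp add: exp_minus field_simps)
          then have "vz a n * L0 a n powr bet a * 1 \<le> vz a n * L0 a n powr bet a * (exp 1 * p)"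
            using v0 by (intro mult_left_mono) auto
          then have "J1 a n x \<le> K6 * p" using J unfolding K6_def by (simp add: algebra_simps)
          then show ?thesis unfolding p_def[symmetric] by (rule KcI) (use Kc Kn in simp)
        qed
      qed
    qed
  qed
qed

end


lemma nbhd_open: "open (nbhd A r)"
proof -
  have "nbhd A r = (\<Union>a\<in>A. ball a r)" by (auto simp: nbhd_def mem_ball dist_commute)
  then show ?thesis by auto
qed

lemma nbhd_sup: "A \<subseteq> nbhd A r" if "0 < r"
proof
  fix x assume "x \<in> A"
  then show "x \<in> nbhd A r" using that unfolding nbhd_def by (intro CollectI bexI[of _ x]) auto
qed

context fixes a :: real and n :: nat assumes a: "a > 0" and n: "n \<ge> 1"
begin

declare sets_nu[OF a n, simp]

lemma unbounded_inf:
  assumes ub: "\<And>x. \<exists>y\<in>A. x < y" and r: "0 < r"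
  shows "emeasure (nu_meas a n) (nbhd A r) = \<infinity>"
proof (rule ccontr)
  assume fin: "emeasure (nu_meas a n) (nbhd A r) \<noteq> \<infinity>"
  obtain f where f: "\<And>x. f x \<in> A \<and> x < f x" using ub by metis
  define g where "g = rec_nat (f 1) (\<lambda>_ y. f (y + 2 * r))"
  have g0: "g 0 = f 1" and gS: "\<And>k. g (Suc k) = f (g k + 2 * r)" by (simp_all add: g_def)
  have gA: "g k \<in> A" for k by (cases k) (simp_all add: g0 gS f)
  have g1: "g k > 1" for k
  proof (induction k)
    case 0 then show ?case using f[of 1] g0 by simp
  next
    case (Suc k) then show ?case using f[of "g k + 2 * r"] gS r by simp
  qed
  have gmono: "g k + 2 * r < g l" if "k < l" for k l
    using that
  proof (induction l)
    case 0 then show ?case by simp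
  next
    case (Suc l)
    have "g l + 2 * r < g (Suc l)" using f[of "g l + 2 * r"] gS by simp
    moreover have "g k \<le> g l" using Suc r by (cases "k = l") (auto dest: less_SucE)
    ultimately show ?case using r by linarith
  qed
  define I where "I k = {g k<..<g k + r}" for k
  have Isub: "I k \<subseteq> nbhd A r" for k
    using gA by (auto simp: I_def nbhd_def dist_real_def intro!: bexI[of _ "g k"])
  have disj: "disjoint_family_on I {..<N}" for N
    unfolding disjoint_family_on_def
  proof (intro ballI impI)
    fix k l assume "k \<in> {..<N}" "l \<in> {..<N}" "k \<noteq> l"
    then consider "k < l" | "l < k" by linarith
    then show "I k \<inter> I l = {}"
      by cases (use gmono[of k l] gmono[of l k] r in \<open>auto simp: I_def\<close>)
  qed
  define p1 where "p1 = pp a n 1"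
  have p1: "p1 > 0" using pp_pos[OF a n, of 1] by (simp add: p1_def)
  have IN: "emeasure (nu_meas a n) (I k) \<ge> ennreal (r * p1)" for k
  proof -
    have "ennreal (r * p1) \<le> ennreal (r * pp a n (g k))"
      unfolding p1_def using pp_mono[OF a n, of 1 "g k"] g1[of k] r
      by (intro ennreal_leI mult_left_mono) auto
    also have "\<dots> \<le> emeasure (nu_meas a n) (I k)"
      unfolding I_def using M3[OF a n, of "g k" r] g1[of k] r by simp
    finally show ?thesis .
  qed
  have big: "ennreal (real N * (r * p1)) \<le> emeasure (nu_meas a n) (nbhd A r)" for N
  proof -
    have "ennreal (real N * (r * p1)) = (\<Sum>k<N. ennreal (r * p1))"
      using r p1 by (simp add: ennreal_of_nat_eq_real_of_nat ennreal_mult)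
    also have "\<dots> \<le> (\<Sum>k<N. emeasure (nu_meas a n) (I k))" by (intro sum_mono IN)
    also have "\<dots> = emeasure (nu_meas a n) (\<Union>k\<in>{..<N}. I k)"
    proof (rule sum_emeasure)
      show "disjoint_family_on I {..<N}" by (rule disj)
    qed (auto simp: I_def)
    also have "\<dots> \<le> emeasure (nu_meas a n) (nbhd A r)"
      by (rule emeasure_mono) (use Isub nbhd_open in auto)
    finally show ?thesis .
  qed
  obtain m where m: "emeasure (nu_meas a n) (nbhd A r) = ennreal m" "0 \<le> m"
    using fin by (cases "emeasure (nu_meas a n) (nbhd A r)" rule: ennreal_cases) auto
  obtain N :: nat where N: "m / (r * p1) < real N" using reals_Archimedean2 by blast
  have "m < real N * (r * p1)" using N r p1 by (simp add: field_simps)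
  moreover have "real N * (r * p1) \<le> m" using big[of N] m r p1 by (simp add: ennreal_le_iff)
  ultimately show False by simp
qed

lemma iso_main:
  assumes A: "A \<in> sets borel" "A \<subseteq> {0<..}" "emeasure (nu_meas a n) A < \<infinity>"
  shows "boundary_measure (nu_meas a n) A \<ge> ereal (J1 a n (measure (nu_meas a n) A) / Kc a n)"
proof -
  let ?M = "nu_meas a n"
  define v where "v = measure ?M A"
  have EA: "emeasure ?M A = ennreal v" using A(3) by (simp add: v_def emeasure_eq_ennreal_measure)
  have v0: "0 \<le> v" by (simp add: v_def)
  have Kp: "Kc a n > 0"
  proof -
    have "exp 1 * vz a n * L0 a n powr bet a > 0" using vz_pos[OF a n] L0_pos[OF a n] by simp
    moreover have "kp a n * exp 1 \<ge> 0" "kp a n / (a * vz a n) \<ge> 0"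
      "(1 + (a + real n) / a + \<bar>ln a\<bar>) powr bet a / a \<ge> 0"
      "exp 1 * (1 + \<bar>ln a\<bar>) powr bet a \<ge> 0" "L0 a n powr bet a / a \<ge> 0"
      using kp_pos[OF a n] vz_pos[OF a n] a by auto
    ultimately show ?thesis unfolding Kc_def by linarith
  qed
  show ?thesis
  proof (cases "A = {}")
    case True
    then have "v = 0" by (simp add: v_def)
    then have J0: "J1 a n v / Kc a n = 0" by (simp add: J1_def)
    have "eventually (\<lambda>r. ereal 0 \<le> (enn2ereal (emeasure ?M (nbhd A r)) - enn2ereal (emeasure ?M A)) / ereal r) (at_right 0)"
      using True by (simp add: nbhd_def)
    then show ?thesis unfolding boundary_measure_def v_def[symmetric] J0 by (rule Liminf_bounded)
  next
    case nonempty: False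
    show ?thesis
    proof (cases "bdd_above A")
      case False
      then have ub: "\<And>x. \<exists>y\<in>A. x < y" by (auto simp: bdd_above_def not_le)
      have "eventually (\<lambda>r. ereal (J1 a n v / Kc a n) \<le> (enn2ereal (emeasure ?M (nbhd A r)) - enn2ereal (emeasure ?M A)) / ereal r) (at_right 0)"
        using eventually_at_right_less[of "0::real"]
      proof eventually_elim
        case (elim r)
        then show ?case using unbounded_inf[OF ub elim] EA by simp
      qed
      then show ?thesis unfolding boundary_measure_def v_def[symmetric] by (rule Liminf_bounded)
    next
      case True
      define s where "s = Sup A"
      obtain a0 where a0: "a0 \<in> A" using nonempty by blast
      have As: "x \<le> s" if "x \<in> A" for x using cSup_upper[OF that True] by (simp add: s_def)
      have sp: "0 < s" using As[OF a0] A(2) a0 by force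
      have Asub: "A \<subseteq> {0<..s}" using As A(2) by auto
      have Ebnd: "emeasure ?M A \<le> emeasure ?M {0<..s}" by (rule emeasure_mono[OF Asub]) simp
      have vb1: "v \<le> s ^ n"
      proof -
        have "0 \<le> s ^ n" using sp by simp
        then show ?thesis using order.trans[OF Ebnd M1[OF a n sp]] EA by (simp add: ennreal_le_iff)
      qed
      have vb2: "v \<le> s powr (a + 1) * pp a n s / a"
      proof -
        have "0 \<le> s powr (a + 1) * pp a n s / a" using sp a pp_pos[OF a n sp] by simp
        then show ?thesis
          using order.trans[OF Ebnd M2[OF a n sp]] EA by (simp add: ennreal_le_iff)
      qed
      have JB: "J1 a n v / Kc a n \<le> pp a n s"
        using Bnd[OF a n sp v0 vb1 vb2] Kp by (simp add: field_simps)
      have "eventually (\<lambda>r. ereal (J1 a n v / Kc a n) \<le> (enn2ereal (emeasure ?M (nbhd A r)) - enn2ereal (emeasure ?M A)) / ereal r) (at_right 0)"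
        using eventually_at_right_less[of "0::real"]
      proof eventually_elim
        case (elim r)
        have sub: "A \<union> {s<..<s+r} \<subseteq> nbhd A r"
        proof
          fix x assume "x \<in> A \<union> {s<..<s+r}"
          then show "x \<in> nbhd A r"
          proof
            assume "x \<in> A" then show ?thesis using nbhd_sup[OF elim] by auto
          next
            assume x: "x \<in> {s<..<s+r}"
            then have "x - r < Sup A" by (simp add: s_def)
            then obtain y where y: "y \<in> A" "x - r < y" using less_cSupD[OF nonempty] by blast
            then have "y \<le> s" using As by simp
            then show ?thesis using x y by (auto simp: nbhd_def dist_real_def intro!: bexI[of _ y])
          qed
        qed
        have disj: "A \<inter> {s<..<s+r} = {}" using As by force
        have "emeasure ?M A + ennreal (r * pp a n s) \<le> emeasure ?M A + emeasure ?M {s<..<s+r}"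
          using M3[OF a n sp elim] by (simp add: add_left_mono)
        also have "\<dots> = emeasure ?M (A \<union> {s<..<s+r})"
          by (rule plus_emeasure) (use A disj in auto)
        also have "\<dots> \<le> emeasure ?M (nbhd A r)"
          by (rule emeasure_mono[OF sub]) (simp add: nbhd_open)
        finally have le: "ennreal (v + r * pp a n s) \<le> emeasure ?M (nbhd A r)"
          using EA v0 elim pp_pos[OF a n sp] by (simp add: ennreal_plus)
        have rp: "0 \<le> r * pp a n s" using elim pp_pos[OF a n sp] by simp
        have key: "ereal (pp a n s) \<le> (enn2ereal (emeasure ?M (nbhd A r)) - enn2ereal (emeasure ?M A)) / ereal r"
        proof (cases "emeasure ?M (nbhd A r)" rule: ennreal_cases)
          case (real m)
          have "ennreal (v + r * pp a n s) \<le> ennreal m" using le real by metis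
          then have m: "v + r * pp a n s \<le> m" using ennreal_le_iff real by blast
          have "pp a n s \<le> (m - v) / r" using m elim by (simp add: field_simps)
          then show ?thesis using real EA v0 elim by (simp add: ereal_divide)
        next
          case top
          then show ?thesis using EA elim by simp
        qed
        show ?case using JB key by (meson ereal_less_eq(3) order.trans)
      qed
      then show ?thesis unfolding boundary_measure_def v_def[symmetric] by (rule Liminf_bounded)
    qed
  qed
qed

end


lemma Kc_pos: "0 < a \<Longrightarrow> 1 \<le> n \<Longrightarrow> Kc a n > 0"
proof -
  assume a: "0 < a" and n: "1 \<le> n"
  have "exp 1 * vz a n * L0 a n powr bet a > 0" using vz_pos[OF a n] L0_pos[OF a n] by simp
  moreover have "kp a n * exp 1 \<ge> 0" "kp a n / (a * vz a n) \<ge> 0"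
    "(1 + (a + real n) / a + \<bar>ln a\<bar>) powr bet a / a \<ge> 0"
    "exp 1 * (1 + \<bar>ln a\<bar>) powr bet a \<ge> 0" "L0 a n powr bet a / a \<ge> 0"
    using kp_pos[OF a n] vz_pos[OF a n] a by auto
  ultimately show ?thesis unfolding Kc_def by linarith
qed

theorem proposition3p2:
  fixes \<alpha> :: real and n :: nat
  assumes "\<alpha> > 0" and "n \<ge> 1"
  shows "\<exists>c c' v0 :: real. c > 0 \<and> c' > 0 \<and> 0 < v0 \<and> v0 < 1 \<and>
    (let J = (\<lambda>v::real. if v = 0 then 0
                else if v \<le> v0 then c * v * (ln (1 / v)) powr (1 + 1 / \<alpha>)
                else c' * v powr (real (n - 1) / real n))
     in lower_isoperimetric (nu_meas \<alpha> n) J \<and>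
        concave_on {0<..} J \<and> mono_on {0<..} J \<and> continuous_on {0<..} J)"
proof -
  note a = assms(1) and nn = assms(2)
  define K where "K = Kc \<alpha> n"
  have K: "K > 0" unfolding K_def using Kc_pos[OF a nn] .
  define c where "c = 1 / K"
  define c' where "c' = kp \<alpha> n / K"
  define v0 where "v0 = vz \<alpha> n"
  have Jeq: "(\<lambda>v::real. if v = 0 then 0
                else if v \<le> v0 then c * v * (ln (1 / v)) powr (1 + 1 / \<alpha>)
                else c' * v powr (real (n - 1) / real n)) = (\<lambda>v. J1 \<alpha> n v / K)"
    by (auto simp: fun_eq_iff J1_def F1_def F2_def bet_def gam_def c_def c'_def v0_def)
  have iso: "lower_isoperimetric (nu_meas \<alpha> n) (\<lambda>v. J1 \<alpha> n v / K)"
    unfolding lower_isoperimetric_def K_def using iso_main[OF a nn] by blast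
  have conc: "concave_on {0<..} (\<lambda>v. J1 \<alpha> n v / K)"
    using K J1_concave[OF a nn] by (intro concave_on_cdiv) auto
  have mono: "mono_on {0<..} (\<lambda>v. J1 \<alpha> n v / K)"
    by (rule mono_onI) (use K J1_mono[OF a nn] in \<open>auto intro: divide_right_mono\<close>)
  have cont: "continuous_on {0<..} (\<lambda>v. J1 \<alpha> n v / K)"
    using K J1_cont[OF a nn] by (intro continuous_intros) auto
  have pos: "c > 0" "c' > 0" "0 < v0" "v0 < 1"
    using K kp_pos[OF a nn] vz_pos[OF a nn] vz_lt1[OF a nn] by (auto simp: c_def c'_def v0_def)
  show ?thesis
    by (rule exI[of _ c], rule exI[of _ c'], rule exI[of _ v0])
       (simp only: Let_def Jeq pos iso conc mono cont simp_thms)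
qed



end
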